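(* For $N\in\mathbb{N}$, let $\pi_N$ be the law of the number of fixed points of a uniformly random permutation of $\{1,\dots,N\}$, and let $\mathcal{P}$ be the Poisson law on $\mathbb{Z}_+=\{0,1,2,\dots\}$ with parameter $1$. Then $$\lim_{N\to\infty}\frac{1}{N\ln N}\,\ln\big(\|\pi_N-\mathcal{P}\|_{\mathrm{tv}}\big)=-1 .$$
   Context: For probability measures $\mu,\mu'$ on $\mathbb{Z}_+$, $\|\mu-\mu'\|_{\mathrm{tv}}=\sup_{A\subset\mathbb{Z}_+}|\mu(A)-\mu'(A)|=\sum_{n}(\mu(n)-\mu'(n))_+$. *)

theory Defs
  imports "HOL-Probability.Probability"
begin

definition tv_dist :: "nat pmf \<Rightarrow> nat pmf \<Rightarrow> real" where
  "tv_dist p q = (SUP A. \<bar>measure_pmf.prob p A - measure_pmf.prob q A\<bar>)"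

definition fixpt_law :: "nat \<Rightarrow> nat pmf" where
  "fixpt_law N = map_pmf (\<lambda>\<sigma>. card {i \<in> {1..N}. \<sigma> i = i})
                   (pmf_of_set {\<sigma>. \<sigma> permutes {1..N}})"

end

theory Submission
  imports Defs "HOL-Real_Asymp.Real_Asymp"
begin

definition fixs :: "nat \<Rightarrow> (nat \<Rightarrow> nat) \<Rightarrow> nat set" where
  "fixs N \<sigma> = {i \<in> {1..N}. \<sigma> i = i}"

lemma perm_fix_eq:
  assumes "T \<subseteq> {1..N}"
  shows "{\<sigma>. \<sigma> permutes {1..N} \<and> T \<subseteq> fixs N \<sigma>} = {\<sigma>. \<sigma> permutes ({1..N} - T)}"
proof (intro set_eqI iffI)
  fix \<sigma> assume "\<sigma> \<in> {\<sigma>. \<sigma> permutes {1..N} \<and> T \<subseteq> fixs N \<sigma>}"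
  then have p: "\<sigma> permutes {1..N}" and t: "T \<subseteq> fixs N \<sigma>" by auto
  show "\<sigma> \<in> {\<sigma>. \<sigma> permutes ({1..N} - T)}"
    using p t unfolding permutes_def fixs_def by auto
next
  fix \<sigma> assume "\<sigma> \<in> {\<sigma>. \<sigma> permutes ({1..N} - T)}"
  then have p: "\<sigma> permutes ({1..N} - T)" by simp
  have "\<sigma> permutes {1..N}" by (rule permutes_subset[OF p]) auto
  moreover have "T \<subseteq> fixs N \<sigma>" using p assms unfolding permutes_def fixs_def by auto
  ultimately show "\<sigma> \<in> {\<sigma>. \<sigma> permutes {1..N} \<and> T \<subseteq> fixs N \<sigma>}" by simp
qed

lemma card_fix_perm:
  assumes "T \<subseteq> {1..N}" "card T = j"
  shows "card {\<sigma>. \<sigma> permutes {1..N} \<and> T \<subseteq> fixs N \<sigma>} = fact (N - j)"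
proof -
  have "finite T" using assms(1) finite_subset by blast
  have "card ({1..N} - T) = N - j" using assms \<open>finite T\<close> by (simp add: card_Diff_subset)
  then show ?thesis unfolding perm_fix_eq[OF assms(1)]
    by (intro card_permutations) auto
qed

lemma sum_choose_fix:
  assumes "j \<le> N"
  shows "(\<Sum>\<sigma>\<in>{\<sigma>. \<sigma> permutes {1..N}}. real (card (fixs N \<sigma>) choose j)) = fact N / fact j"
proof -
  define Pi where "Pi = {\<sigma>. \<sigma> permutes {1..(N::nat)}}"
  define Pj where "Pj = {T. T \<subseteq> {1..N} \<and> card T = j}"
  have fPi: "finite Pi" unfolding Pi_def by (simp add: finite_permutations)
  have fPj: "finite Pj" unfolding Pj_def by simp
  have fs: "fixs N \<sigma> \<subseteq> {1..N}" for \<sigma> unfolding fixs_def by auto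
  have "real (card (fixs N \<sigma>) choose j) = (\<Sum>T\<in>Pj. if T \<subseteq> fixs N \<sigma> then 1 else 0)" for \<sigma>
  proof -
    have "card (fixs N \<sigma>) choose j = card {T. T \<subseteq> fixs N \<sigma> \<and> card T = j}"
      by (rule n_subsets[symmetric]) (meson finite_atLeastAtMost finite_subset fs)
    also have "{T. T \<subseteq> fixs N \<sigma> \<and> card T = j} = {T\<in>Pj. T \<subseteq> fixs N \<sigma>}"
      unfolding Pj_def using fs by blast
    finally show ?thesis using sum.inter_filter[OF fPj, of "\<lambda>_. (1::real)"] by simp
  qed
  then have "(\<Sum>\<sigma>\<in>Pi. real (card (fixs N \<sigma>) choose j))
      = (\<Sum>\<sigma>\<in>Pi. \<Sum>T\<in>Pj. if T \<subseteq> fixs N \<sigma> then 1 else 0)" by simp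
  also have "\<dots> = (\<Sum>T\<in>Pj. \<Sum>\<sigma>\<in>Pi. if T \<subseteq> fixs N \<sigma> then 1 else 0)" by (rule sum.swap)
  also have "\<dots> = (\<Sum>T\<in>Pj. real (fact (N - j)))"
  proof (rule sum.cong[OF refl])
    fix T assume "T \<in> Pj"
    then have "card {\<sigma>\<in>Pi. T \<subseteq> fixs N \<sigma>} = fact (N - j)"
      using card_fix_perm[of T N j] unfolding Pj_def Pi_def by simp
    then have "real (card {\<sigma>\<in>Pi. T \<subseteq> fixs N \<sigma>}) = real (fact (N - j))" by simp
    then show "(\<Sum>\<sigma>\<in>Pi. if T \<subseteq> fixs N \<sigma> then 1 else 0) = real (fact (N - j))"
      using sum.inter_filter[OF fPi, of "\<lambda>_. (1::real)" "\<lambda>\<sigma>. T \<subseteq> fixs N \<sigma>"] by simp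
  qed
  also have "\<dots> = real (N choose j) * fact (N - j)"
    unfolding Pj_def using n_subsets[of "{1..N}" j] by simp
  also have "\<dots> = fact N / fact j" using assms by (simp add: binomial_fact)
  finally show ?thesis unfolding Pi_def .
qed


lemma indicator_inv:
  fixes X k N :: nat
  assumes "X \<le> N"
  shows "(if X = k then 1 else 0 :: real) =
         (\<Sum>j=k..N. (-1)^(j-k) * real (j choose k) * real (X choose j))"
proof (cases "X < k")
  case True
  have "(\<Sum>j=k..N. (-1)^(j-k) * real (j choose k) * real (X choose j)) = 0"
    using True by (intro sum.neutral ballI) auto
  then show ?thesis using True by simp
next
  case False
  then have kX: "k \<le> X" by simp
  have "(\<Sum>j=k..N. (-1)^(j-k) * real (j choose k) * real (X choose j))
      = (\<Sum>j=k..X. (-1)^(j-k) * real (j choose k) * real (X choose j))"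
  proof -
    have "{k..N} = {k..X} \<union> {X<..N}" using kX assms by auto
    then have "(\<Sum>j=k..N. (-1)^(j-k) * real (j choose k) * real (X choose j))
       = (\<Sum>j=k..X. (-1)^(j-k) * real (j choose k) * real (X choose j))
       + (\<Sum>j\<in>{X<..N}. (-1)^(j-k) * real (j choose k) * real (X choose j))"
      by (simp add: sum.union_disjoint ivl_disj_int)
    moreover have "(\<Sum>j\<in>{X<..N}. (-1)^(j-k) * real (j choose k) * real (X choose j)) = 0"
      by (intro sum.neutral ballI) auto
    ultimately show ?thesis by simp
  qed
  also have "\<dots> = (\<Sum>j=k..X. (-1)^(j-k) * real (X choose k) * real ((X - k) choose (j - k)))"
  proof (rule sum.cong[OF refl])
    fix j assume "j \<in> {k..X}"
    then have "(X choose j) * (j choose k) = (X choose k) * ((X-k) choose (j-k))"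
      by (intro choose_mult) auto
    then have "real (X choose j) * real (j choose k) = real (X choose k) * real ((X-k) choose (j-k))"
      by (metis of_nat_mult)
    then show "(-1)^(j-k) * real (j choose k) * real (X choose j) = (-1)^(j-k) * real (X choose k) * real ((X - k) choose (j - k))"
      by (simp add: mult.commute mult.left_commute)
  qed
  also have "\<dots> = (\<Sum>i=0..X-k. (-1)^i * real (X choose k) * real ((X - k) choose i))"
    using sum.shift_bounds_cl_nat_ivl[of "\<lambda>j. (-1)^(j-k) * real (X choose k) * real ((X - k) choose (j - k))" 0 k "X-k"] kX
    by simp
  also have "\<dots> = real (X choose k) * (\<Sum>i\<le>X-k. (-1)^i * real ((X - k) choose i))"
    by (simp add: sum_distrib_left atLeast0AtMost mult.commute mult.left_commute)
  also have "\<dots> = (if X = k then 1 else 0)"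
  proof (cases "X = k")
    case True then show ?thesis by simp
  next
    case False
    have pos: "0 < X - k" using kX False by simp
    have "(\<Sum>i\<le>X-k. (-1)^i * real ((X - k) choose i)) = 0"
      using choose_alternating_sum[OF pos, where 'a=real] by simp
    then show ?thesis using False by simp
  qed
  finally show ?thesis by simp
qed


lemma card_fixs_le: "card (fixs N \<sigma>) \<le> N"
proof -
  have "card (fixs N \<sigma>) \<le> card {1..N}" unfolding fixs_def by (intro card_mono) auto
  then show ?thesis by simp
qed

lemma fixpt_law_alt: "fixpt_law N = map_pmf (\<lambda>\<sigma>. card (fixs N \<sigma>)) (pmf_of_set {\<sigma>. \<sigma> permutes {1..N}})"
  unfolding fixpt_law_def fixs_def by simp

lemma Pi_props: "{\<sigma>. \<sigma> permutes {1..N}} \<noteq> {}" "finite {\<sigma>. \<sigma> permutes {1..N}}"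
  "card {\<sigma>. \<sigma> permutes {1..N}} = fact N"
  using permutes_id[of "{1..N}"] by (blast, auto simp: finite_permutations card_permutations)

lemma pmf_fix:
  "pmf (fixpt_law N) k = (\<Sum>j=k..N. (-1)^(j-k) * real (j choose k) / fact j)"
proof -
  define Pi where "Pi = {\<sigma>. \<sigma> permutes {1..(N::nat)}}"
  have P: "Pi \<noteq> {}" "finite Pi" "card Pi = fact N" using Pi_props[of N] unfolding Pi_def by auto
  have "pmf (fixpt_law N) k = real (card (Pi \<inter> (\<lambda>\<sigma>. card (fixs N \<sigma>)) -` {k})) / fact N"
    unfolding fixpt_law_alt pmf_map Pi_def[symmetric] using P by (simp add: measure_pmf_of_set vimage_def Int_def)
  also have "real (card (Pi \<inter> (\<lambda>\<sigma>. card (fixs N \<sigma>)) -` {k})) = (\<Sum>\<sigma>\<in>Pi. if card (fixs N \<sigma>) = k then 1 else 0)"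
  proof -
    have "Pi \<inter> (\<lambda>\<sigma>. card (fixs N \<sigma>)) -` {k} = {\<sigma>\<in>Pi. card (fixs N \<sigma>) = k}" by auto
    then show ?thesis using sum.inter_filter[OF P(2), of "\<lambda>_. (1::real)" "\<lambda>\<sigma>. card (fixs N \<sigma>) = k"] by simp
  qed
  also have "\<dots> = (\<Sum>\<sigma>\<in>Pi. \<Sum>j=k..N. (-1)^(j-k) * real (j choose k) * real (card (fixs N \<sigma>) choose j))"
    by (intro sum.cong refl indicator_inv card_fixs_le)
  also have "\<dots> = (\<Sum>j=k..N. \<Sum>\<sigma>\<in>Pi. (-1)^(j-k) * real (j choose k) * real (card (fixs N \<sigma>) choose j))"
    by (rule sum.swap)
  also have "\<dots> = (\<Sum>j=k..N. (-1)^(j-k) * real (j choose k) * (fact N / fact j))"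
  proof (rule sum.cong[OF refl])
    fix j assume "j \<in> {k..N}"
    then have "(\<Sum>\<sigma>\<in>Pi. real (card (fixs N \<sigma>) choose j)) = fact N / fact j"
      unfolding Pi_def by (intro sum_choose_fix) auto
    then show "(\<Sum>\<sigma>\<in>Pi. (-1)^(j-k) * real (j choose k) * real (card (fixs N \<sigma>) choose j)) = (-1)^(j-k) * real (j choose k) * (fact N / fact j)"
      by (simp add: sum_distrib_left[symmetric])
  qed
  finally show ?thesis by (simp add: sum_divide_distrib)
qed


lemma pmf_fix2:
  assumes "k \<le> N"
  shows "pmf (fixpt_law N) k = (\<Sum>i<N-k+1. (-1)^i / fact i) / fact k"
proof -
  have "pmf (fixpt_law N) k = (\<Sum>i=0..N-k. (-1)^(i+k-k) * real ((i+k) choose k) / fact (i+k))"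
    unfolding pmf_fix using sum.shift_bounds_cl_nat_ivl[of "\<lambda>j. (-1)^(j-k) * real (j choose k) / fact j" 0 k "N-k"] assms
    by simp
  also have "\<dots> = (\<Sum>i=0..N-k. (-1)^i / fact i / fact k)"
  proof (rule sum.cong[OF refl])
    fix i
    have "real ((i+k) choose k) = fact (i+k) / (fact k * fact i)" by (simp add: binomial_fact)
    then show "(-1)^(i+k-k) * real ((i+k) choose k) / fact (i+k) = (-1)^i / fact i / fact k"
      by (simp add: field_simps)
  qed
  also have "\<dots> = (\<Sum>i<N-k+1. (-1)^i / fact i) / fact k"
    by (simp add: sum_divide_distrib atLeast0AtMost lessThan_Suc_atMost)
  finally show ?thesis .
qed

lemma pmf_pois: "pmf (poisson_pmf 1) k = exp (-1) / fact k"
  by (simp add: pmf_poisson)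

lemma diff_bound:
  assumes "k \<le> N"
  shows "\<bar>pmf (fixpt_law N) k - pmf (poisson_pmf 1) k\<bar> \<le> 3 / (fact k * fact (N+1-k))"
proof -
  obtain t :: real where t: "\<bar>t\<bar> \<le> \<bar>-1\<bar>"
    and e: "exp (-1) = (\<Sum>m<N-k+1. (-1)^m / fact m) + exp t / fact (N-k+1) * (-1)^(N-k+1)"
    using Maclaurin_exp_le[of "-1::real" "N-k+1"] by blast
  have "exp t \<le> exp 1" using t by simp
  also have "\<dots> \<le> 3" by (rule exp_le)
  finally have et: "exp t \<le> 3" .
  have "pmf (fixpt_law N) k - pmf (poisson_pmf 1) k = - (exp t / fact (N-k+1) * (-1)^(N-k+1)) / fact k"
  proof -
    define S where "S = (\<Sum>m<N-k+1. (-1)^m / fact m :: real)"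
    define R where "R = exp t / fact (N-k+1) * (-1)^(N-k+1)"
    define F where "F = (fact k :: real)"
    have "F > 0" unfolding F_def by simp
    have "pmf (fixpt_law N) k - pmf (poisson_pmf 1) k = S / F - (S + R) / F"
      unfolding pmf_fix2[OF assms] pmf_pois e S_def R_def F_def by simp
    also have "\<dots> = - R / F" using \<open>F > 0\<close> by (simp add: field_simps)
    finally show ?thesis unfolding R_def F_def .
  qed
  then have "\<bar>pmf (fixpt_law N) k - pmf (poisson_pmf 1) k\<bar> = exp t / (fact k * fact (N-k+1))"
    by (simp add: abs_mult power_abs)
  also have "\<dots> \<le> 3 / (fact k * fact (N-k+1))"
    using et by (intro divide_right_mono) auto
  finally show ?thesis using assms by (simp add: Suc_diff_le)
qed


lemma sum_diff_bound:
  "(\<Sum>k\<le>N. \<bar>pmf (fixpt_law N) k - pmf (poisson_pmf 1) k\<bar>) \<le> 3 * 2^(N+1) / fact (N+1)"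
proof -
  have "(\<Sum>k\<le>N. \<bar>pmf (fixpt_law N) k - pmf (poisson_pmf 1) k\<bar>) \<le> (\<Sum>k\<le>N. 3 / (fact k * fact (N+1-k)))"
    by (intro sum_mono diff_bound) auto
  also have "\<dots> = (\<Sum>k\<le>N. 3 * real ((N+1) choose k) / fact (N+1))"
  proof (rule sum.cong[OF refl])
    fix k assume "k \<in> {..N}"
    then have "real ((N+1) choose k) = fact (N+1) / (fact k * fact (N+1-k))"
      by (intro binomial_fact) auto
    moreover have "3 / (fact k * fact (N+1-k)) = 3 * (fact (N+1) / (fact k * fact (N+1-k))) / (fact (N+1) :: real)"
    proof -
      define a where "a = (fact k * fact (N+1-k) :: real)"
      define F where "F = (fact (N+1) :: real)"
      have "F \<noteq> 0" unfolding F_def by simp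
      then have "3 / a = 3 * (F / a) / F" by simp
      then show ?thesis unfolding a_def F_def .
    qed
    ultimately show "3 / (fact k * fact (N+1-k)) = 3 * real ((N+1) choose k) / fact (N+1)"
      by simp
  qed
  also have "\<dots> = 3 * real (\<Sum>k\<le>N. ((N+1) choose k)) / fact (N+1)"
    by (simp add: sum_divide_distrib sum_distrib_left)
  also have "\<dots> \<le> 3 * 2^(N+1) / fact (N+1)"
  proof -
    have "(\<Sum>k\<le>N. ((N+1) choose k)) \<le> (\<Sum>k\<le>N+1. ((N+1) choose k))"
      by (intro sum_mono2) auto
    also have "\<dots> = 2^(N+1)" by (rule choose_row_sum)
    finally have "real (\<Sum>k\<le>N. ((N+1) choose k)) \<le> 2^(N+1)"
      by (metis of_nat_le_iff of_nat_numeral of_nat_power)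
    then show ?thesis by (intro divide_right_mono) auto
  qed
  finally show ?thesis .
qed

lemma pois_tail:
  "measure_pmf.prob (poisson_pmf 1) {N<..} \<le> 1 / fact (N+1)"
  "measure_pmf.prob (poisson_pmf 1) {N<..} \<ge> exp (-1) / fact (N+1)"
proof -
  let ?q = "poisson_pmf 1"
  have "measure_pmf.prob ?q {N<..} = measure_pmf.prob ?q (space (measure_pmf ?q) - {..N})"
    by (simp add: Compl_eq_Diff_UNIV[symmetric])
  also have "\<dots> = 1 - measure_pmf.prob ?q {..N}" by (rule measure_pmf.prob_compl) simp
  also have "measure_pmf.prob ?q {..N} = (\<Sum>k\<le>N. exp (-1) / fact k)"
    by (simp add: measure_measure_pmf_finite pmf_pois)
  finally have eq: "measure_pmf.prob ?q {N<..} = 1 - (\<Sum>k\<le>N. exp (-1) / fact k)" .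
  obtain t :: real where t: "\<bar>t\<bar> \<le> \<bar>1\<bar>"
    and e: "exp 1 = (\<Sum>m<N+1. 1^m / fact m) + exp t / fact (N+1) * 1^(N+1)"
    using Maclaurin_exp_le[of "1::real" "N+1"] by blast
  have e2: "exp 1 = (\<Sum>m\<le>N. 1 / fact m) + exp t / fact (N+1)"
    using e by (simp add: lessThan_Suc_atMost)
  have "(\<Sum>k\<le>N. exp (-1) / fact k) = exp (-1) * (\<Sum>k\<le>N. 1 / (fact k::real))"
    by (simp add: sum_distrib_left)
  also have "\<dots> = exp (-1) * (exp 1 - exp t / fact (N+1))" using e2 by simp
  also have "\<dots> = 1 - exp (-1) * exp t / fact (N+1)"
    by (simp add: algebra_simps exp_minus field_simps)
  finally have eq2: "measure_pmf.prob ?q {N<..} = exp (-1) * exp t / fact (N+1)"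
    using eq by simp
  have "exp (-1) * exp t \<le> 1"
    using t by (simp add: exp_add[symmetric])
  then show "measure_pmf.prob ?q {N<..} \<le> 1 / fact (N+1)"
    unfolding eq2 by (intro divide_right_mono) auto
  have "measure_pmf.prob ?q {N<..} \<ge> measure_pmf.prob ?q {N+1}"
    by (intro measure_pmf.finite_measure_mono) auto
  then show "measure_pmf.prob ?q {N<..} \<ge> exp (-1) / fact (N+1)"
    by (simp add: measure_pmf_single pmf_pois)
qed


lemma pmf_fix_zero: "k > N \<Longrightarrow> pmf (fixpt_law N) k = 0"
  unfolding pmf_fix by simp

lemma tv_term_bound:
  "\<bar>measure_pmf.prob (fixpt_law N) A - measure_pmf.prob (poisson_pmf 1) A\<bar>
     \<le> (3 * 2^(N+1) + 1) / fact (N+1)"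
proof -
  let ?p = "fixpt_law N" and ?q = "poisson_pmf 1"
  define B1 where "B1 = A \<inter> {..N}"
  define B2 where "B2 = A \<inter> {N<..}"
  have AB: "A = B1 \<union> B2" "B1 \<inter> B2 = {}" unfolding B1_def B2_def by auto
  have fB1: "finite B1" unfolding B1_def by simp
  have pA: "measure_pmf.prob ?p A = measure_pmf.prob ?p B1 + measure_pmf.prob ?p B2"
    unfolding AB(1) by (rule measure_pmf.finite_measure_Union) (use AB in auto)
  have qA: "measure_pmf.prob ?q A = measure_pmf.prob ?q B1 + measure_pmf.prob ?q B2"
    unfolding AB(1) by (rule measure_pmf.finite_measure_Union) (use AB in auto)
  have p2: "measure_pmf.prob ?p B2 = 0"
    unfolding measure_pmf_zero_iff set_pmf_eq B2_def using pmf_fix_zero by auto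
  have q2: "measure_pmf.prob ?q B2 \<le> 1 / fact (N+1)"
  proof -
    have "measure_pmf.prob ?q B2 \<le> measure_pmf.prob ?q {N<..}"
      unfolding B2_def by (intro measure_pmf.finite_measure_mono) auto
    then show ?thesis using pois_tail(1)[of N] by linarith
  qed
  have q2': "measure_pmf.prob ?q B2 \<ge> 0" by simp
  have "\<bar>measure_pmf.prob ?p B1 - measure_pmf.prob ?q B1\<bar>
      = \<bar>\<Sum>k\<in>B1. pmf ?p k - pmf ?q k\<bar>"
    using fB1 by (simp add: measure_measure_pmf_finite sum_subtractf)
  also have "\<dots> \<le> (\<Sum>k\<in>B1. \<bar>pmf ?p k - pmf ?q k\<bar>)" by (rule sum_abs)
  also have "\<dots> \<le> (\<Sum>k\<le>N. \<bar>pmf ?p k - pmf ?q k\<bar>)"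
    by (intro sum_mono2) (auto simp: B1_def)
  also have "\<dots> \<le> 3 * 2^(N+1) / fact (N+1)" by (rule sum_diff_bound)
  finally have d1: "\<bar>measure_pmf.prob ?p B1 - measure_pmf.prob ?q B1\<bar> \<le> 3 * 2^(N+1) / fact (N+1)" .
  have "\<bar>measure_pmf.prob ?p A - measure_pmf.prob ?q A\<bar>
      \<le> \<bar>measure_pmf.prob ?p B1 - measure_pmf.prob ?q B1\<bar> + measure_pmf.prob ?q B2"
    unfolding pA qA p2 using q2' by linarith
  also have "\<dots> \<le> 3 * 2^(N+1) / fact (N+1) + 1 / fact (N+1)" using d1 q2 by linarith
  also have "\<dots> = (3 * 2^(N+1) + 1) / fact (N+1)" by (simp add: add_divide_distrib)
  finally show ?thesis .
qed

lemma tv_bounds: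
  "tv_dist (fixpt_law N) (poisson_pmf 1) \<le> (3 * 2^(N+1) + 1) / fact (N+1)"
  "tv_dist (fixpt_law N) (poisson_pmf 1) \<ge> exp (-1) / fact (N+1)"
proof -
  show "tv_dist (fixpt_law N) (poisson_pmf 1) \<le> (3 * 2^(N+1) + 1) / fact (N+1)"
    unfolding tv_dist_def by (intro cSUP_least tv_term_bound) auto
  let ?f = "\<lambda>A. \<bar>measure_pmf.prob (fixpt_law N) A - measure_pmf.prob (poisson_pmf 1) A\<bar>"
  have bdd: "bdd_above (range ?f)"
    by (intro bdd_aboveI2[where M="(3 * 2^(N+1) + 1) / fact (N+1)"] tv_term_bound)
  have "measure_pmf.prob (fixpt_law N) {N<..} = 0"
    unfolding measure_pmf_zero_iff set_pmf_eq using pmf_fix_zero by auto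
  then have "?f {N<..} = measure_pmf.prob (poisson_pmf 1) {N<..}" by simp
  also have "\<dots> \<ge> exp (-1) / fact (N+1)" by (rule pois_tail(2))
  finally have "exp (-1) / fact (N+1) \<le> ?f {N<..}" .
  also have "?f {N<..} \<le> (SUP A. ?f A)" by (rule cSUP_upper[OF _ bdd]) simp
  finally show "tv_dist (fixpt_law N) (poisson_pmf 1) \<ge> exp (-1) / fact (N+1)"
    unfolding tv_dist_def .
qed


lemma ln_fact_upper: "n \<ge> 1 \<Longrightarrow> ln (fact n :: real) \<le> real n * ln (real n)"
proof -
  assume n: "n \<ge> 1"
  have "(fact n :: real) \<le> real n ^ n" using fact_le_power[of n, where 'a=real] by simp
  then have "ln (fact n :: real) \<le> ln (real n ^ n)" by (intro ln_mono) auto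
  also have "\<dots> = real n * ln (real n)" using n by (simp add: ln_realpow)
  finally show ?thesis .
qed

lemma ln_fact_lower: "n \<ge> 1 \<Longrightarrow> real n * ln (real n) - real n \<le> ln (fact n :: real)"
proof -
  assume n: "n \<ge> 1"
  obtain t :: real where
    e: "exp (real n) = (\<Sum>m<n+1. real n ^ m / fact m) + exp t / fact (n+1) * real n ^ (n+1)"
    using Maclaurin_exp_le[of "real n" "n+1"] by blast
  have "real n ^ n / fact n \<le> (\<Sum>m<n+1. real n ^ m / fact m)"
    by (rule member_le_sum[where f="\<lambda>m. real n ^ m / fact m"]) auto
  also have "\<dots> \<le> exp (real n)" unfolding e by (intro add_increasing2) auto
  finally have "real n ^ n / fact n \<le> exp (real n)" .
  then have "ln (real n ^ n / fact n) \<le> ln (exp (real n))" using n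
    by (intro ln_mono) auto
  then have "ln (real n ^ n / fact n) \<le> real n" by simp
  also have "ln (real n ^ n / fact n) = real n * ln (real n) - ln (fact n)"
    using n by (simp add: ln_div ln_realpow)
  finally show ?thesis by simp
qed

lemma asym1: "((\<lambda>N::nat. (-1 - real (N+1) * ln (real (N+1))) / (real N * ln (real N))) \<longlongrightarrow> -1) at_top"
  by real_asymp

lemma asym2: "((\<lambda>N::nat. (ln 4 + real (N+1) * ln 2 - real (N+1) * ln (real (N+1)) + real (N+1)) / (real N * ln (real N))) \<longlongrightarrow> -1) at_top"
  by real_asymp

theorem mainTheorem1:
  shows "((\<lambda>N::nat. ln (tv_dist (fixpt_law N) (poisson_pmf 1)) / (real N * ln (real N)))
           \<longlongrightarrow> -1) at_top"
proof (rule tendsto_sandwich[OF _ _ asym1 asym2])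
  show "\<forall>\<^sub>F N in at_top. (-1 - real (N+1) * ln (real (N+1))) / (real N * ln (real N))
          \<le> ln (tv_dist (fixpt_law N) (poisson_pmf 1)) / (real N * ln (real N))"
  proof (rule eventually_mono[OF eventually_ge_at_top[of 2]])
    fix N :: nat assume N: "2 \<le> N"
    have pos: "real N * ln (real N) > 0" using N by (intro mult_pos_pos) auto
    define T where "T = tv_dist (fixpt_law N) (poisson_pmf 1)"
    have lb: "exp (-1) / fact (N+1) \<le> T" unfolding T_def by (rule tv_bounds(2))
    have "-1 - real (N+1) * ln (real (N+1)) \<le> -1 - ln (fact (N+1) :: real)"
      using ln_fact_upper[of "N+1"] by simp
    also have "\<dots> = ln (exp (-1) / fact (N+1))" by (simp add: ln_div)
    also have "\<dots> \<le> ln T" using lb by (intro ln_mono) auto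
    finally show "(-1 - real (N+1) * ln (real (N+1))) / (real N * ln (real N)) \<le> ln T / (real N * ln (real N))"
      using pos by (intro divide_right_mono) auto
  qed
  show "\<forall>\<^sub>F N in at_top. ln (tv_dist (fixpt_law N) (poisson_pmf 1)) / (real N * ln (real N))
          \<le> (ln 4 + real (N+1) * ln 2 - real (N+1) * ln (real (N+1)) + real (N+1)) / (real N * ln (real N))"
  proof (rule eventually_mono[OF eventually_ge_at_top[of 2]])
    fix N :: nat assume N: "2 \<le> N"
    have pos: "real N * ln (real N) > 0" using N by (intro mult_pos_pos) auto
    define T where "T = tv_dist (fixpt_law N) (poisson_pmf 1)"
    have lb: "exp (-1) / fact (N+1) \<le> T" unfolding T_def by (rule tv_bounds(2))
    then have Tpos: "T > 0" by (smt (verit) divide_pos_pos exp_gt_zero fact_gt_zero)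
    have ub: "T \<le> (3 * 2^(N+1) + 1) / fact (N+1)" unfolding T_def by (rule tv_bounds(1))
    also have "\<dots> \<le> (4 * 2^(N+1)) / fact (N+1)"
      using one_le_power[of "2::real" "N+1"] by (intro divide_right_mono) auto
    finally have "ln T \<le> ln ((4 * 2^(N+1)) / fact (N+1))" using Tpos by (intro ln_mono) auto
    also have "\<dots> = ln 4 + real (N+1) * ln 2 - ln (fact (N+1))"
    proof -
      have a: "ln ((4::real) * 2^(N+1)) = ln 4 + ln (2^(N+1))" using ln_mult[of "4::real" "2^(N+1)"] by simp
      have b: "ln ((2::real)^(N+1)) = real (N+1) * ln 2" by (rule ln_realpow; simp)
      have c: "ln ((4 * 2^(N+1)) / fact (N+1)) = ln ((4::real) * 2^(N+1)) - ln (fact (N+1))"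
        unfolding ln_div[of "(4::real) * 2^(N+1)" "fact (N+1)"] by simp
      show ?thesis unfolding c a b ..
    qed
    also have "\<dots> \<le> ln 4 + real (N+1) * ln 2 - real (N+1) * ln (real (N+1)) + real (N+1)"
      using ln_fact_lower[of "N+1"] by simp
    finally show "ln T / (real N * ln (real N)) \<le> (ln 4 + real (N+1) * ln 2 - real (N+1) * ln (real (N+1)) + real (N+1)) / (real N * ln (real N))"
      using pos by (intro divide_right_mono) auto
  qed
qed

end
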